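(* Let $s\in\{\tfrac12,1,\tfrac32,\dots\}$, $N\ge1$ and $\lambda\in\mathbb{C}$. The transfer matrix $t^{(2s)}_1(u)$ satisfies, for all $u\in\mathbb{C}$, $${}^t\,t^{(2s)}_1(-u-2\lambda s)=(-1)^{N-1}\,t^{(2s)}_1(u),$$ where ${}^t$ denotes the transpose on $(\mathbb{C}^{2s+1})^{\otimes N}$ with respect to the standard tensor-product basis.
   Context: Define $a_j(u)=\sinh[u+(2s+1-j)\lambda]$ and $b_j(\lambda)=\sqrt{\sinh(j\lambda)\sinh[\lambda(2s+1-j)]}$ (fixed choice of square root). Let $R^{(1,2s)}(u)$ be the matrix on $\mathbb{C}^2\otimes\mathbb{C}^{2s+1}$ (indices $\mu,\nu\in\{1,2\}$, $\alpha,\beta\in\{1,\dots,2s+1\}$) whose only nonzero entries are $R_{1j}^{1j}=a_j(u)$, $R_{2j}^{2j}=a_{2s+2-j}(u)$, $R_{1\,j+1}^{2\,j}=R_{2\,j}^{1\,j+1}=b_j(\lambda)$. With auxiliary space $V_a=\mathbb{C}^2$ and quantum spaces $V_1,\dots,V_N\cong\mathbb{C}^{2s+1}$, let $R_{ak}(u)$ be $R^{(1,2s)}(u)$ acting on $V_a\otimes V_k$, and $F_a=\begin{pmatrix}0&1\\1&0\end{pmatrix}$ acting on $V_a$. Then $t^{(2s)}_1(u)={\rm tr}_a\big(R_{a1}(u)\cdots R_{aN}(u)F_a\big)$, an operator on $V_1\otimes\cdots\otimes V_N$. *)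

theory Defs
  imports Complex_Main "HOL-Library.FuncSet"
begin

text \<open>Spin n = 2s (a positive natural number); indices alpha in {1..n+1}, mu in {1,2}.\<close>

definition a_fun :: "nat \<Rightarrow> complex \<Rightarrow> complex \<Rightarrow> nat \<Rightarrow> complex" where
  "a_fun n lam u j = sinh (u + (of_nat (n + 1) - of_nat j) * lam)"

text \<open>The matrix R^(1,2s)(u) on C^2 (x) C^(2s+1); entries indexed by row (mu,alpha)
  and column (nu,beta). b is the chosen square root family b_j.\<close>
definition Rmat :: "nat \<Rightarrow> complex \<Rightarrow> (nat \<Rightarrow> complex) \<Rightarrow> complex \<Rightarrow> nat \<times> nat \<Rightarrow> nat \<times> nat \<Rightarrow> complex" where
  "Rmat n lam b u = (\<lambda>(mu, al) (nu, be).
     if mu = 1 \<and> nu = 1 \<and> al = be \<and> 1 \<le> al \<and> al \<le> n + 1 then a_fun n lam u al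
     else if mu = 2 \<and> nu = 2 \<and> al = be \<and> 1 \<le> al \<and> al \<le> n + 1 then a_fun n lam u (n + 2 - al)
     else if mu = 1 \<and> nu = 2 \<and> al = be + 1 \<and> 1 \<le> be \<and> be \<le> n then b be
     else if mu = 2 \<and> nu = 1 \<and> be = al + 1 \<and> 1 \<le> al \<and> al \<le> n then b al
     else 0)"

text \<open>Matrix entry <al| t(u) |be> of t(u) = tr_a(R_a1(u) ... R_aN(u) F_a), where the
  standard basis vector e_{al 1} (x) ... (x) e_{al N} is given by al : {1..N} -> {1..n+1}.
  Expanding the auxiliary-space matrix product and trace: mu 0, ..., mu N are the
  auxiliary indices, F_a contributes the factor [mu N ~= mu 0].\<close>
definition transfer :: "nat \<Rightarrow> complex \<Rightarrow> (nat \<Rightarrow> complex) \<Rightarrow> nat \<Rightarrow> complex \<Rightarrow> (nat \<Rightarrow> nat) \<Rightarrow> (nat \<Rightarrow> nat) \<Rightarrow> complex" where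
  "transfer n lam b N u al be =
     (\<Sum>mu \<in> Pi\<^sub>E {0..N} (\<lambda>_. {1::nat, 2}).
        (if mu N \<noteq> mu 0 then 1 else 0) *
        (\<Prod>k\<in>{1..N}. Rmat n lam b u (mu (k - 1), al k) (mu k, be k)))"

end

theory Submission
  imports Defs
begin

lemma sinh_neg_c: "sinh (- x) = - sinh (x::complex)"
  by (simp add: sinh_def field_simps)

lemma R_flip:
  assumes "mu \<in> {1::nat,2}" "nu \<in> {1,2}"
  shows "Rmat n lam b (- u - lam * of_nat n) (3 - mu, be) (3 - nu, al)
       = (if mu = nu then -1 else 1) * Rmat n lam b u (mu, al) (nu, be)"
proof -
  have A: "a_fun n lam (- u - lam * of_nat n) j = - a_fun n lam u (n + 2 - j)" if "1 \<le> j" "j \<le> n + 1" for j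
  proof -
    have "(- u - lam * of_nat n) + (of_nat (n + 1) - of_nat j) * lam = - (u + (of_nat (n + 1) - of_nat (n + 2 - j)) * lam)"
      using that by (simp add: of_nat_diff algebra_simps)
    then show ?thesis unfolding a_fun_def by (metis sinh_neg_c)
  qed
  have B: "a_fun n lam (- u - lam * of_nat n) (n + 2 - j) = - a_fun n lam u j" if "1 \<le> j" "j \<le> n + 1" for j
    using A[of "n+2-j"] that by simp
  show ?thesis using assms
    by (auto simp: Rmat_def A B)
qed

lemma sign_prod:
  assumes "\<And>k. k \<le> m \<Longrightarrow> mu k \<in> {1::nat,2}"
  shows "(\<Prod>k\<in>{1..m}. (if mu (k - 1) = mu k then -1 else 1 :: complex))
       = (-1) ^ m * (if mu m = mu 0 then 1 else -1)"
  using assms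
proof (induction m)
  case 0
  then show ?case by simp
next
  case (Suc m)
  have IH: "(\<Prod>k\<in>{1..m}. (if mu (k - 1) = mu k then -1 else 1 :: complex))
       = (-1) ^ m * (if mu m = mu 0 then 1 else -1)" using Suc by simp
  have m0: "mu 0 \<in> {1,2}" "mu m \<in> {1,2}" "mu (Suc m) \<in> {1,2}" using Suc.prems by auto
  have "(\<Prod>k\<in>{1..Suc m}. (if mu (k - 1) = mu k then -1 else 1 :: complex))
     = (\<Prod>k\<in>{1..m}. (if mu (k - 1) = mu k then -1 else 1 :: complex)) * (if mu m = mu (Suc m) then -1 else 1)"
    by (simp add: prod.nat_ivl_Suc')
  also have "\<dots> = (-1) ^ Suc m * (if mu (Suc m) = mu 0 then 1 else -1)"
    unfolding IH using m0 by auto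
  finally show ?case .
qed

theorem lemma2:
  fixes n N :: nat and lam u :: complex and b :: "nat \<Rightarrow> complex"
    and al be :: "nat \<Rightarrow> nat"
  assumes "n \<ge> 1"
    and "N \<ge> 1"
    and "\<And>j. b j ^ 2 = sinh (of_nat j * lam) * sinh (lam * (of_nat (n + 1) - of_nat j))"
    and "\<And>k. k \<in> {1..N} \<Longrightarrow> al k \<in> {1..n + 1}"
    and "\<And>k. k \<in> {1..N} \<Longrightarrow> be k \<in> {1..n + 1}"
  shows "transfer n lam b N (- u - lam * of_nat n) be al = (-1) ^ (N - 1) * transfer n lam b N u al be"
proof -
  define P where "P = Pi\<^sub>E {0..N} (\<lambda>_. {1::nat, 2})"
  define g where "g = (\<lambda>mu::nat\<Rightarrow>nat. \<lambda>k. if k \<in> {0..N} then 3 - mu k else undefined)"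
  define f where "f = (\<lambda>mu. (if mu N \<noteq> mu 0 then 1 else 0) *
        (\<Prod>k\<in>{1..N}. Rmat n lam b (- u - lam * of_nat n) (mu (k - 1), be k) (mu k, al k)))"
  have gP: "g mu \<in> P" if "mu \<in> P" for mu
    using that unfolding P_def g_def PiE_def Pi_def extensional_def by auto
  have gg: "g (g mu) = mu" if "mu \<in> P" for mu
  proof
    fix k show "g (g mu) k = mu k"
      using that unfolding P_def g_def PiE_def Pi_def extensional_def by auto
  qed
  have "transfer n lam b N (- u - lam * of_nat n) be al = sum f P"
    unfolding transfer_def f_def P_def by simp
  also have "\<dots> = sum (\<lambda>mu. f (g mu)) P"
    by (rule sum.reindex_bij_witness[where i=g and j=g]) (auto simp: gP gg)
  also have "\<dots> = sum (\<lambda>mu. (-1) ^ (N - 1) * ((if mu N \<noteq> mu 0 then 1 else 0) *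
        (\<Prod>k\<in>{1..N}. Rmat n lam b u (mu (k - 1), al k) (mu k, be k)))) P"
  proof (rule sum.cong[OF refl])
    fix mu assume mu: "mu \<in> P"
    have mv: "mu k \<in> {1,2}" if "k \<le> N" for k using mu that unfolding P_def by auto
    have gk: "g mu k = 3 - mu k" if "k \<le> N" for k using that unfolding g_def by auto
    have cond: "(g mu N \<noteq> g mu 0) = (mu N \<noteq> mu 0)"
      using gk[of N] gk[of 0] mv[of N] mv[of 0] by auto
    have pr: "(\<Prod>k\<in>{1..N}. Rmat n lam b (- u - lam * of_nat n) (g mu (k - 1), be k) (g mu k, al k))
       = (\<Prod>k\<in>{1..N}. (if mu (k - 1) = mu k then -1 else 1) * Rmat n lam b u (mu (k - 1), al k) (mu k, be k))"
    proof (rule prod.cong[OF refl])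
      fix k assume k: "k \<in> {1..N}"
      show "Rmat n lam b (- u - lam * of_nat n) (g mu (k - 1), be k) (g mu k, al k)
         = (if mu (k - 1) = mu k then -1 else 1) * Rmat n lam b u (mu (k - 1), al k) (mu k, be k)"
        using k gk[of k] gk[of "k-1"] R_flip[OF mv[of "k-1"] mv[of k]] by auto
    qed
    have sp: "(\<Prod>k\<in>{1..N}. (if mu (k - 1) = mu k then -1 else 1 :: complex))
       = (-1) ^ N * (if mu N = mu 0 then 1 else -1)"
      by (rule sign_prod) (use mv in auto)
    show "f (g mu) = (-1) ^ (N - 1) * ((if mu N \<noteq> mu 0 then 1 else 0) *
        (\<Prod>k\<in>{1..N}. Rmat n lam b u (mu (k - 1), al k) (mu k, be k)))"
    proof (cases "mu N = mu 0")
      case True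
      then show ?thesis unfolding f_def cond by simp
    next
      case False
      have "(-1::complex) ^ N * (-1) = (-1) ^ (N - 1)"
        using assms(2) by (cases N) auto
      then show ?thesis unfolding f_def cond pr prod.distrib sp using False by simp
    qed
  qed
  also have "\<dots> = (-1) ^ (N - 1) * transfer n lam b N u al be"
    unfolding transfer_def P_def by (simp add: sum_distrib_left)
  finally show ?thesis .
qed

end
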